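(* Let $M\ge 2$ be even, $T\ge 1$, $\mathcal{X}'=\{\pm1,\pm3,\ldots,\pm(M-1)\}$, $\mathcal{X}=\{x\in\mathbb{C}: \mathrm{Re}(x)\in\mathcal{X}',\ \mathrm{Im}(x)\in\mathcal{X}'\}$ (square $M^2$-QAM), and $\mathcal{C}=\mathcal{X}^T\subset\mathbb{C}^T$. Let $\mathbf{y}\in\mathbb{C}^T$, $\mathbf{y}\neq\mathbf 0$. Let $\mathbf{x}^{\mathrm{opt}}$ be any maximizer of $|\hat{\mathbf{x}}^\dagger\mathbf{y}|^2/\|\hat{\mathbf{x}}\|^2$ over $\hat{\mathbf{x}}\in\mathcal{C}$, let $h^{\mathrm{opt}}=(\mathbf{x}^{\mathrm{opt}})^\dagger\mathbf{y}/\|\mathbf{x}^{\mathrm{opt}}\|^2$ and $\lambda^{\mathrm{opt}}=1/h^{\mathrm{opt}}$. Then for all $t=1,\ldots,T$, $|\mathrm{Re}(\lambda^{\mathrm{opt}}y_t)|\le M+2T-2$ and $|\mathrm{Im}(\lambda^{\mathrm{opt}}y_t)|\le M+2T-2$.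
   Context: $(\cdot)^\dagger$ is the Hermitian transpose and $\|\cdot\|$ the Euclidean norm. This is noncoherent GLRT detection of $M^2$-ary square QAM codewords of length $T$ over a complex-valued block fading channel $\mathbf{y}=h\mathbf{x}+\mathbf{n}$; since $\mathbf{y}\neq\mathbf 0$ the maximum is positive so $h^{\mathrm{opt}}\neq 0$. *)

theory Defs
  imports "HOL-Analysis.Analysis"
begin

text \<open>Vectors in C^T are represented as functions nat => complex, components
  indexed by t < T (t = 0..T-1 corresponds to t = 1..T in the paper).\<close>

definition pam_alphabet :: "nat \<Rightarrow> real set" where
  "pam_alphabet M = {r. \<exists>k::int. r = of_int k \<and> odd k \<and> \<bar>k\<bar> \<le> int M - 1}"

definition qam_alphabet :: "nat \<Rightarrow> complex set" where
  "qam_alphabet M = {x. Re x \<in> pam_alphabet M \<and> Im x \<in> pam_alphabet M}"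

definition qam_codebook :: "nat \<Rightarrow> nat \<Rightarrow> (nat \<Rightarrow> complex) set" where
  "qam_codebook M T = {x. \<forall>t<T. x t \<in> qam_alphabet M}"

definition herm_inner :: "nat \<Rightarrow> (nat \<Rightarrow> complex) \<Rightarrow> (nat \<Rightarrow> complex) \<Rightarrow> complex" where
  "herm_inner T x y = (\<Sum>t<T. cnj (x t) * y t)"

definition vnorm2 :: "nat \<Rightarrow> (nat \<Rightarrow> complex) \<Rightarrow> real" where
  "vnorm2 T x = (\<Sum>t<T. (cmod (x t))^2)"

definition glrt_metric :: "nat \<Rightarrow> (nat \<Rightarrow> complex) \<Rightarrow> (nat \<Rightarrow> complex) \<Rightarrow> real" where
  "glrt_metric T y x = (cmod (herm_inner T x y))^2 / vnorm2 T x"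

end

theory Submission
  imports Defs
begin

lemma pam_bound: "r \<in> pam_alphabet M \<Longrightarrow> \<bar>r\<bar> \<le> real M - 1"
  unfolding pam_alphabet_def by auto

lemma pam_nz: "r \<in> pam_alphabet M \<Longrightarrow> r \<ge> 1 \<or> r \<le> -1"
proof -
  assume "r \<in> pam_alphabet M"
  then obtain k :: int where k: "r = of_int k" "odd k" unfolding pam_alphabet_def by auto
  then have "k \<ge> 1 \<or> k \<le> -1" by presburger
  then show ?thesis using k by auto
qed

lemma pam_down: "r \<in> pam_alphabet M \<Longrightarrow> r \<ge> 1 \<Longrightarrow> r - 2 \<in> pam_alphabet M"
proof -
  assume "r \<in> pam_alphabet M" "r \<ge> 1"
  then obtain k :: int where k: "r = of_int k" "odd k" "\<bar>k\<bar> \<le> int M - 1" unfolding pam_alphabet_def by auto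
  with \<open>r \<ge> 1\<close> have "k \<ge> 1" by simp
  have "r - 2 = of_int (k - 2) \<and> odd (k - 2) \<and> \<bar>k - 2\<bar> \<le> int M - 1"
    using k \<open>k \<ge> 1\<close> by auto
  then show ?thesis unfolding pam_alphabet_def by blast
qed

lemma pam_up: "r \<in> pam_alphabet M \<Longrightarrow> r \<le> -1 \<Longrightarrow> r + 2 \<in> pam_alphabet M"
proof -
  assume "r \<in> pam_alphabet M" "r \<le> -1"
  then obtain k :: int where k: "r = of_int k" "odd k" "\<bar>k\<bar> \<le> int M - 1" unfolding pam_alphabet_def by auto
  with \<open>r \<le> -1\<close> have "k \<le> -1" by simp
  have "r + 2 = of_int (k + 2) \<and> odd (k + 2) \<and> \<bar>k + 2\<bar> \<le> int M - 1"
    using k \<open>k \<le> -1\<close> by auto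
  then show ?thesis unfolding pam_alphabet_def by blast
qed

lemma pam_up2: "even M \<Longrightarrow> r \<in> pam_alphabet M \<Longrightarrow> r < real M - 1 \<Longrightarrow> r + 2 \<in> pam_alphabet M"
proof -
  assume "even M" "r \<in> pam_alphabet M" "r < real M - 1"
  then obtain k :: int where k: "r = of_int k" "odd k" "\<bar>k\<bar> \<le> int M - 1" unfolding pam_alphabet_def by auto
  with \<open>r < real M - 1\<close> have "k < int M - 1" by simp
  with \<open>even M\<close> k have "k \<le> int M - 3" by presburger
  have "r + 2 = of_int (k + 2) \<and> odd (k + 2) \<and> \<bar>k + 2\<bar> \<le> int M - 1"
    using k \<open>k \<le> int M - 3\<close> by auto
  then show ?thesis unfolding pam_alphabet_def by blast
qed

lemma pam_down2: "even M \<Longrightarrow> r \<in> pam_alphabet M \<Longrightarrow> r > 1 - real M \<Longrightarrow> r - 2 \<in> pam_alphabet M"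
proof -
  assume "even M" "r \<in> pam_alphabet M" "r > 1 - real M"
  then obtain k :: int where k: "r = of_int k" "odd k" "\<bar>k\<bar> \<le> int M - 1" unfolding pam_alphabet_def by auto
  with \<open>r > 1 - real M\<close> have "k > 1 - int M" by simp
  with \<open>even M\<close> k have "k \<ge> 3 - int M" by presburger
  have "r - 2 = of_int (k - 2) \<and> odd (k - 2) \<and> \<bar>k - 2\<bar> \<le> int M - 1"
    using k \<open>k \<ge> 3 - int M\<close> by auto
  then show ?thesis unfolding pam_alphabet_def by blast
qed

lemma cb_pos: assumes "w \<in> qam_codebook M T" "T \<ge> 1" shows "vnorm2 T w > 0"
proof -
  have "\<forall>t\<in>{..<T}. (cmod (w t))^2 > 0"
  proof
    fix t assume "t \<in> {..<T}"
    then have "Re (w t) \<in> pam_alphabet M" using assms unfolding qam_codebook_def qam_alphabet_def by auto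
    then have "Re (w t) \<noteq> 0" using pam_nz by fastforce
    then have "w t \<noteq> 0" by auto
    then show "(cmod (w t))^2 > 0" by simp
  qed
  moreover have "0 \<in> {..<T}" using assms(2) by auto
  then have "{..<T} \<noteq> {}" by blast
  ultimately show ?thesis unfolding vnorm2_def by (intro sum_pos) auto
qed

lemma dist_expand:
  "(\<Sum>t<T. (cmod (z t - w t))^2) = vnorm2 T z - 2 * Re (herm_inner T w z) + vnorm2 T w"
proof -
  have e: "(cmod (a - b))^2 = (cmod a)^2 - 2 * Re (cnj b * a) + (cmod b)^2" for a b :: complex
    unfolding cmod_power2 by (simp add: power2_eq_square algebra_simps)
  show ?thesis unfolding vnorm2_def herm_inner_def
    by (simp add: e sum.distrib sum_subtractf Re_sum sum_distrib_left)
qed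

lemma lsq: assumes "vnorm2 T w > 0"
  shows "(\<Sum>t<T. (cmod (z t - w t))^2) \<ge> vnorm2 T z - glrt_metric T z w"
proof -
  define u where "u = herm_inner T w z"
  define n where "n = vnorm2 T w"
  have n: "n > 0" using assms n_def by simp
  have "(Re u)^2 \<le> (cmod u)^2" using abs_Re_le_cmod[of u]
    by (metis abs_ge_zero power2_abs power_mono)
  moreover have "(Re u - n)^2 \<ge> 0" by simp
  ultimately have "(cmod u)^2 - 2 * n * Re u + n^2 \<ge> 0" by (simp add: power2_eq_square algebra_simps)
  then have "((cmod u)^2 - 2 * n * Re u + n^2) / n \<ge> 0" using n by simp
  then have "(cmod u)^2 / n - 2 * Re u + n \<ge> 0" using n by (simp add: field_simps power2_eq_square)
  then show ?thesis unfolding glrt_metric_def dist_expand u_def[symmetric] n_def[symmetric] by simp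
qed

lemma pert:
  assumes cb: "x \<in> qam_codebook M T" and T: "T \<ge> 1"
    and opt: "\<forall>w \<in> qam_codebook M T. glrt_metric T z w \<le> glrt_metric T z x"
    and hx: "herm_inner T x z = complex_of_real (vnorm2 T x)"
    and s: "s < T" and d: "x s + d \<in> qam_alphabet M"
  shows "(cmod (z s - x s - d))^2 \<ge> (cmod (z s - x s))^2"
proof -
  define w where "w = x(s := x s + d)"
  have wcb: "w \<in> qam_codebook M T" using cb d unfolding w_def qam_codebook_def by auto
  have N: "vnorm2 T x > 0" using cb_pos[OF cb T] .
  have mx: "glrt_metric T z x = vnorm2 T x"
    unfolding glrt_metric_def hx using N by (simp add: power2_eq_square)
  have A1: "(\<Sum>t<T. (cmod (z t - w t))^2) \<ge> vnorm2 T z - glrt_metric T z w"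
    using lsq[OF cb_pos[OF wcb T]] .
  have A2: "glrt_metric T z w \<le> vnorm2 T x" using opt wcb mx by auto
  have A: "(\<Sum>t<T. (cmod (z t - w t))^2) \<ge> vnorm2 T z - vnorm2 T x" using A1 A2 by linarith
  have B: "(\<Sum>t<T. (cmod (z t - x t))^2) = vnorm2 T z - vnorm2 T x"
    unfolding dist_expand hx by simp
  have sT: "s \<in> {..<T}" using s by simp
  have "(\<Sum>t<T. (cmod (z t - w t))^2) = (cmod (z s - w s))^2 + (\<Sum>t\<in>{..<T}-{s}. (cmod (z t - w t))^2)"
    using sum.remove[OF _ sT] by simp
  also have "(\<Sum>t\<in>{..<T}-{s}. (cmod (z t - w t))^2) = (\<Sum>t\<in>{..<T}-{s}. (cmod (z t - x t))^2)"
    by (rule sum.cong) (auto simp: w_def)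
  finally have C: "(\<Sum>t<T. (cmod (z t - w t))^2) = (cmod (z s - w s))^2 + (\<Sum>t\<in>{..<T}-{s}. (cmod (z t - x t))^2)" .
  have D: "(\<Sum>t<T. (cmod (z t - x t))^2) = (cmod (z s - x s))^2 + (\<Sum>t\<in>{..<T}-{s}. (cmod (z t - x t))^2)"
    using sum.remove[OF _ sT] by simp
  have "w s = x s + d" by (simp add: w_def)
  then have "(cmod (z s - (x s + d)))^2 \<ge> (cmod (z s - x s))^2" using A B C D by (simp only:)
  then show ?thesis by (simp add: diff_diff_eq)
qed

lemma re_from: "(cmod (w - complex_of_real c))^2 \<ge> (cmod w)^2 \<Longrightarrow> 2 * c * Re w \<le> c^2"
  unfolding cmod_power2 by (simp add: power2_eq_square algebra_simps)

lemma im_from: "(cmod (w - complex_of_real c * \<i>))^2 \<ge> (cmod w)^2 \<Longrightarrow> 2 * c * Im w \<le> c^2"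
  unfolding cmod_power2 by (simp add: power2_eq_square algebra_simps)

lemma term_lb:
  fixes a r m :: real
  assumes "\<bar>a\<bar> \<le> m" "a \<ge> 1 \<Longrightarrow> r \<ge> -1" "a \<le> -1 \<Longrightarrow> r \<le> 1" "a \<ge> 1 \<or> a \<le> -1"
  shows "a * r \<ge> - m"
proof (cases "a \<ge> 1")
  case True
  then have "a * (r + 1) \<ge> 0" using assms(2) by simp
  then show ?thesis using assms(1) True by (simp add: algebra_simps)
next
  case False
  then have "a \<le> -1" "r \<le> 1" using assms by auto
  then have "a * (r - 1) \<ge> 0" by (simp add: mult_nonpos_nonpos)
  then show ?thesis using assms(1) by (simp add: algebra_simps)
qed

lemma comp_bound:
  fixes a r m K :: real
  assumes "\<bar>a\<bar> \<le> m" "a \<ge> 1 \<Longrightarrow> r \<ge> -1" "a \<le> -1 \<Longrightarrow> r \<le> 1"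
    "a < m \<Longrightarrow> r \<le> 1" "a > -m \<Longrightarrow> r \<ge> -1" "a * r \<le> K * m" "K \<ge> 1" "m \<ge> 1"
  shows "\<bar>a + r\<bar> \<le> m + K"
proof -
  consider "a = m" | "a = -m" | "\<bar>a\<bar> < m" using assms(1) by linarith
  then show ?thesis
  proof cases
    case 1
    then have "m * r \<le> m * K" using assms(6) by (simp add: mult.commute)
    then have "r \<le> K" using assms(8) by simp
    then show ?thesis using 1 assms by auto
  next
    case 2
    then have "m * (- r) \<le> m * K" using assms(6) by (simp add: mult.commute)
    then have "- r \<le> K" using assms(8) by (simp only: mult_le_cancel_left_pos)
    then show ?thesis using 2 assms by auto
  next
    case 3
    then have "r \<le> 1" "r \<ge> -1" using assms by auto
    then show ?thesis using 3 assms(7) by (simp add: abs_le_iff abs_less_iff)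
  qed
qed

lemma local_facts:
  assumes cb: "x \<in> qam_codebook M T" and T: "T \<ge> 1"
    and opt: "\<forall>w \<in> qam_codebook M T. glrt_metric T z w \<le> glrt_metric T z x"
    and hx: "herm_inner T x z = complex_of_real (vnorm2 T x)"
    and ev: "even M" and t: "t < T"
  shows "Re (x t) \<ge> 1 \<Longrightarrow> Re (z t) - Re (x t) \<ge> -1"
    and "Re (x t) \<le> -1 \<Longrightarrow> Re (z t) - Re (x t) \<le> 1"
    and "Re (x t) < real M - 1 \<Longrightarrow> Re (z t) - Re (x t) \<le> 1"
    and "Re (x t) > -(real M - 1) \<Longrightarrow> Re (z t) - Re (x t) \<ge> -1"
    and "Im (x t) \<ge> 1 \<Longrightarrow> Im (z t) - Im (x t) \<ge> -1"
    and "Im (x t) \<le> -1 \<Longrightarrow> Im (z t) - Im (x t) \<le> 1"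
    and "Im (x t) < real M - 1 \<Longrightarrow> Im (z t) - Im (x t) \<le> 1"
    and "Im (x t) > -(real M - 1) \<Longrightarrow> Im (z t) - Im (x t) \<ge> -1"
proof -
  have xa: "Re (x t) \<in> pam_alphabet M" "Im (x t) \<in> pam_alphabet M"
    using cb t unfolding qam_codebook_def qam_alphabet_def by auto
  have R: "2 * c * Re (z t - x t) \<le> c^2" if "Re (x t) + c \<in> pam_alphabet M" for c
  proof -
    have "x t + complex_of_real c \<in> qam_alphabet M" using that xa unfolding qam_alphabet_def by simp
    from pert[OF cb T opt hx t this] have "(cmod ((z t - x t) - complex_of_real c))^2 \<ge> (cmod (z t - x t))^2"
      by (simp add: algebra_simps)
    then show ?thesis by (rule re_from)
  qed
  have I: "2 * c * Im (z t - x t) \<le> c^2" if "Im (x t) + c \<in> pam_alphabet M" for c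
  proof -
    have "x t + complex_of_real c * \<i> \<in> qam_alphabet M" using that xa unfolding qam_alphabet_def by simp
    from pert[OF cb T opt hx t this] have "(cmod ((z t - x t) - complex_of_real c * \<i>))^2 \<ge> (cmod (z t - x t))^2"
      by (simp add: algebra_simps)
    then show ?thesis by (rule im_from)
  qed
  show "Re (x t) \<ge> 1 \<Longrightarrow> Re (z t) - Re (x t) \<ge> -1"
    using R[of "-2"] pam_down[OF xa(1)] by simp
  show "Re (x t) \<le> -1 \<Longrightarrow> Re (z t) - Re (x t) \<le> 1"
    using R[of "2"] pam_up[OF xa(1)] by simp
  show "Re (x t) < real M - 1 \<Longrightarrow> Re (z t) - Re (x t) \<le> 1"
    using R[of "2"] pam_up2[OF ev xa(1)] by simp
  show "Re (x t) > -(real M - 1) \<Longrightarrow> Re (z t) - Re (x t) \<ge> -1"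
    using R[of "-2"] pam_down2[OF ev xa(1)] by simp
  show "Im (x t) \<ge> 1 \<Longrightarrow> Im (z t) - Im (x t) \<ge> -1"
    using I[of "-2"] pam_down[OF xa(2)] by simp
  show "Im (x t) \<le> -1 \<Longrightarrow> Im (z t) - Im (x t) \<le> 1"
    using I[of "2"] pam_up[OF xa(2)] by simp
  show "Im (x t) < real M - 1 \<Longrightarrow> Im (z t) - Im (x t) \<le> 1"
    using I[of "2"] pam_up2[OF ev xa(2)] by simp
  show "Im (x t) > -(real M - 1) \<Longrightarrow> Im (z t) - Im (x t) \<ge> -1"
    using I[of "-2"] pam_down2[OF ev xa(2)] by simp
qed

lemma core:
  assumes cb: "x \<in> qam_codebook M T" and T: "T \<ge> 1"
    and opt: "\<forall>w \<in> qam_codebook M T. glrt_metric T z w \<le> glrt_metric T z x"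
    and hx: "herm_inner T x z = complex_of_real (vnorm2 T x)"
    and ev: "even M" and M2: "M \<ge> 2" and s: "s < T"
  shows "\<bar>Re (z s)\<bar> \<le> real M + 2 * real T - 2 \<and> \<bar>Im (z s)\<bar> \<le> real M + 2 * real T - 2"
proof -
  define m where "m = real M - 1"
  define A where "A t = Re (x t) * (Re (z t) - Re (x t))" for t
  define B where "B t = Im (x t) * (Im (z t) - Im (x t))" for t
  note LF = local_facts[OF cb T opt hx ev]
  have xa: "Re (x t) \<in> pam_alphabet M" "Im (x t) \<in> pam_alphabet M" if "t < T" for t
    using cb that unfolding qam_codebook_def qam_alphabet_def by auto
  have Alb: "A t \<ge> - m" if "t < T" for t
    unfolding A_def m_def
    by (rule term_lb[OF pam_bound[OF xa(1)[OF that]] LF(1)[OF that] LF(2)[OF that] pam_nz[OF xa(1)[OF that]]])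
  have Blb: "B t \<ge> - m" if "t < T" for t
    unfolding B_def m_def
    by (rule term_lb[OF pam_bound[OF xa(2)[OF that]] LF(5)[OF that] LF(6)[OF that] pam_nz[OF xa(2)[OF that]]])
  have pt: "Re (cnj a * b) - (cmod a)^2 = Re a * (Re b - Re a) + Im a * (Im b - Im a)" for a b :: complex
    unfolding cmod_power2 by (simp add: power2_eq_square algebra_simps)
  have "Re (herm_inner T x z) - vnorm2 T x = 0" using hx by simp
  then have "(\<Sum>t<T. Re (cnj (x t) * z t) - (cmod (x t))^2) = 0"
    unfolding herm_inner_def vnorm2_def by (simp add: Re_sum sum_subtractf)
  then have S0: "(\<Sum>t<T. A t) + (\<Sum>t<T. B t) = 0"
    unfolding pt A_def B_def by (simp add: sum.distrib)
  have sT: "s \<in> {..<T}" using s by simp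
  have "(\<Sum>t\<in>{..<T}-{s}. A t) \<ge> of_nat (card ({..<T}-{s})) * (- m)"
    by (rule sum_bounded_below) (use Alb in auto)
  moreover have "card ({..<T}-{s}) = T - 1" using sT by simp
  ultimately have SA: "(\<Sum>t\<in>{..<T}-{s}. A t) \<ge> (real T - 1) * (- m)" using T by (simp add: of_nat_diff)
  have "(\<Sum>t\<in>{..<T}-{s}. B t) \<ge> of_nat (card ({..<T}-{s})) * (- m)"
    by (rule sum_bounded_below) (use Blb in auto)
  with \<open>card ({..<T}-{s}) = T - 1\<close> have SB': "(\<Sum>t\<in>{..<T}-{s}. B t) \<ge> (real T - 1) * (- m)" using T by (simp add: of_nat_diff)
  have SB: "(\<Sum>t<T. B t) \<ge> real T * (- m)"
    using sum_bounded_below[of "{..<T}" "-m" B] Blb by auto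
  have SA2: "(\<Sum>t<T. A t) \<ge> real T * (- m)"
    using sum_bounded_below[of "{..<T}" "-m" A] Alb by auto
  have Ad: "(\<Sum>t<T. A t) = A s + (\<Sum>t\<in>{..<T}-{s}. A t)" using sum.remove[OF _ sT] by simp
  have Bd: "(\<Sum>t<T. B t) = B s + (\<Sum>t\<in>{..<T}-{s}. B t)" using sum.remove[OF _ sT] by simp
  have K: "A s \<le> (2 * real T - 1) * m" using S0 Ad SA SB by (simp add: algebra_simps)
  have K2: "B s \<le> (2 * real T - 1) * m" using S0 Bd SB' SA2 by (simp add: algebra_simps)
  have m1: "m \<ge> 1" using M2 m_def by simp
  have K1: "2 * real T - 1 \<ge> 1" using T by simp
  have "\<bar>Re (x s) + (Re (z s) - Re (x s))\<bar> \<le> m + (2 * real T - 1)"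
    apply (rule comp_bound[OF _ LF(1)[OF s] LF(2)[OF s] _ _ _ K1 m1])
    using pam_bound[OF xa(1)[OF s]] LF(3)[OF s] LF(4)[OF s] K unfolding m_def A_def by auto
  moreover have "\<bar>Im (x s) + (Im (z s) - Im (x s))\<bar> \<le> m + (2 * real T - 1)"
    apply (rule comp_bound[OF _ LF(5)[OF s] LF(6)[OF s] _ _ _ K1 m1])
    using pam_bound[OF xa(2)[OF s]] LF(7)[OF s] LF(8)[OF s] K2 unfolding m_def B_def by auto
  ultimately show ?thesis unfolding m_def by simp
qed

lemma herm_scale: "herm_inner T x (\<lambda>t. c * y t) = c * herm_inner T x y"
  unfolding herm_inner_def by (simp add: sum_distrib_left algebra_simps)

lemma metric_scale: "glrt_metric T (\<lambda>t. c * y t) x = (cmod c)^2 * glrt_metric T y x"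
  unfolding glrt_metric_def herm_scale by (simp add: norm_mult power_mult_distrib)

theorem theorem2:
  fixes M T :: nat and y xopt :: "nat \<Rightarrow> complex"
  assumes "M \<ge> 2" and "even M" and "T \<ge> 1"
    and "\<exists>t<T. y t \<noteq> 0"
    and "xopt \<in> qam_codebook M T"
    and "\<forall>x \<in> qam_codebook M T. glrt_metric T y x \<le> glrt_metric T y xopt"
  shows "\<forall>t<T.
     let hopt = herm_inner T xopt y / complex_of_real (vnorm2 T xopt);
         lopt = 1 / hopt
     in \<bar>Re (lopt * y t)\<bar> \<le> real M + 2 * real T - 2
      \<and> \<bar>Im (lopt * y t)\<bar> \<le> real M + 2 * real T - 2"
proof (intro allI impI)
  fix s assume s: "s < T"
  define u where "u = herm_inner T xopt y"
  define N where "N = vnorm2 T xopt"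
  have Np: "N > 0" unfolding N_def by (rule cb_pos[OF assms(5) assms(3)])
  define c where "c = 1 / (u / complex_of_real N)"
  show "let hopt = herm_inner T xopt y / complex_of_real (vnorm2 T xopt);
         lopt = 1 / hopt
     in \<bar>Re (lopt * y s)\<bar> \<le> real M + 2 * real T - 2
      \<and> \<bar>Im (lopt * y s)\<bar> \<le> real M + 2 * real T - 2"
    unfolding Let_def u_def[symmetric] N_def[symmetric] c_def[symmetric]
  proof (cases "u = 0")
    case True
    then have "c = 0" unfolding c_def by simp
    then show "\<bar>Re (c * y s)\<bar> \<le> real M + 2 * real T - 2 \<and> \<bar>Im (c * y s)\<bar> \<le> real M + 2 * real T - 2"
      using assms(1,3) by simp
  next
    case False
    define z where "z t = c * y t" for t
    have zf: "z = (\<lambda>t. c * y t)" unfolding z_def by simp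
    have hx: "herm_inner T xopt z = complex_of_real (vnorm2 T xopt)"
      unfolding zf herm_scale u_def[symmetric] N_def[symmetric] c_def using False Np by simp
    have opt: "\<forall>w \<in> qam_codebook M T. glrt_metric T z w \<le> glrt_metric T z xopt"
      unfolding zf metric_scale using assms(6) by (simp add: mult_left_mono)
    from core[OF assms(5) assms(3) opt hx assms(2) assms(1) s]
    show "\<bar>Re (c * y s)\<bar> \<le> real M + 2 * real T - 2 \<and> \<bar>Im (c * y s)\<bar> \<le> real M + 2 * real T - 2"
      unfolding z_def .
  qed
qed

end
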